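(* Assume $N\ge2$ and that conditions A and D' hold for the stochastic matrices $(p_{ij}(\varepsilon))_{i,j\in\mathbb{X}}$, $\varepsilon\in(0,\varepsilon_0]$, and let $\delta^\circ=\min_{i\in\mathbb{X},\,j\in\mathbb{Y}_i}\delta_{ij}$. Then for every $r\in\mathbb{X}$ the reduced matrices $({}_rp_{ij}(\varepsilon))_{i,j\in{}_r\mathbb{X}}$, $\varepsilon\in(0,\varepsilon_0]$, also satisfy condition A (on the state space ${}_r\mathbb{X}$, with the same $\varepsilon_0$ and transition sets ${}_r\mathbb{Y}_i$) and condition D'; that is, for every $i\in{}_r\mathbb{X}$, $j\in{}_r\mathbb{Y}_i$ there are integers $0\le{}_rl^-_{ij}\le{}_rl^+_{ij}$, reals ${}_ra_{ij}[l]$ with ${}_ra_{ij}[{}_rl^-_{ij}]>0$, and ${}_r\delta_{ij}\in(0,1]$, ${}_rG_{ij}\in(0,\infty)$, ${}_r\varepsilon_{ij}\in(0,\varepsilon_0]$ such that $\big|{}_rp_{ij}(\varepsilon)-\sum_{l={}_rl^-_{ij}}^{{}_rl^+_{ij}}{}_ra_{ij}[l]\varepsilon^l\big|\le{}_rG_{ij}\varepsilon^{{}_rl^+_{ij}+{}_r\delta_{ij}}$ for $0<\varepsilon\le{}_r\varepsilon_{ij}$. Moreover this holds with ${}_r\delta_{ij}\ge\delta^\circ$ for all $j\in{}_r\mathbb{Y}_i$, $i\in{}_r\mathbb{X}$, $r\in\mathbb{X}$.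
   Context: Let $\mathbb{X}=\{1,\dots,N\}$, $0<\varepsilon_0\le1$, and for each $\varepsilon\in(0,\varepsilon_0]$ let $(p_{ij}(\varepsilon))_{i,j\in\mathbb{X}}$ be a stochastic matrix. Condition A: there are nonempty sets $\mathbb{Y}_i\subseteq\mathbb{X}$ such that (a) $p_{ij}(\varepsilon)>0$ for $j\in\mathbb{Y}_i$ and all $\varepsilon\in(0,\varepsilon_0]$; (b) $p_{ij}(\varepsilon)=0$ for $j\notin\mathbb{Y}_i$; (c) for every $i,j$ there exist $n\ge1$ and $i=l_0,\dots,l_n=j$ with $l_m\in\mathbb{Y}_{l_{m-1}}$. Condition D': for all $i$ and $j\in\mathbb{Y}_i$, $p_{ij}(\varepsilon)=\sum_{l=l^-_{ij}}^{l^+_{ij}}a_{ij}[l]\varepsilon^l+o_{ij}(\varepsilon)$ on $(0,\varepsilon_0]$ with integers $0\le l^-_{ij}\le l^+_{ij}$, $a_{ij}[l^-_{ij}]>0$, and $|o_{ij}(\varepsilon)|\le G_{ij}\varepsilon^{l^+_{ij}+\delta_{ij}}$ for $0<\varepsilon\le\varepsilon_{ij}$, where $\delta_{ij}\in(0,1]$, $G_{ij}\in(0,\infty)$, $\varepsilon_{ij}\in(0,\varepsilon_0]$. (Under A, $p_{rr}(\varepsilon)<1$.) Reduced chain: for $r\in\mathbb{X}$ let ${}_r\mathbb{X}=\mathbb{X}\setminus\{r\}$ and ${}_rp_{ij}(\varepsilon)=p_{ij}(\varepsilon)+p_{ir}(\varepsilon)\frac{p_{rj}(\varepsilon)}{1-p_{rr}(\varepsilon)}$,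 $i,j\in{}_r\mathbb{X}$ (the transition probabilities of the chain observed only at visits to ${}_r\mathbb{X}$). Its transition sets are ${}_r\mathbb{Y}_i=\{j\in{}_r\mathbb{X}: j\in\mathbb{Y}_i\ \text{or}\ (r\in\mathbb{Y}_i\text{ and }j\in\mathbb{Y}_r)\}$, $i\in{}_r\mathbb{X}$. Conditions A and D' for the reduced chain mean the same conditions with $\mathbb{X},p_{ij},\mathbb{Y}_i$ replaced by ${}_r\mathbb{X},{}_rp_{ij},{}_r\mathbb{Y}_i$. *)

theory Defs
  imports Complex_Main
begin

text \<open>States are natural numbers; the state space is a finite set S (X = {1..N}).
  A family of matrices is p :: real => nat => nat => real, p eps i j.\<close>

definition stochastic_family :: "nat set \<Rightarrow> real \<Rightarrow> (real \<Rightarrow> nat \<Rightarrow> nat \<Rightarrow> real) \<Rightarrow> bool" where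
  "stochastic_family S eps0 p \<longleftrightarrow>
     (\<forall>eps\<in>{0<..eps0}. (\<forall>i\<in>S. \<forall>j\<in>S. 0 \<le> p eps i j) \<and> (\<forall>i\<in>S. (\<Sum>j\<in>S. p eps i j) = 1))"

definition condition_A :: "nat set \<Rightarrow> real \<Rightarrow> (real \<Rightarrow> nat \<Rightarrow> nat \<Rightarrow> real) \<Rightarrow> (nat \<Rightarrow> nat set) \<Rightarrow> bool" where
  "condition_A S eps0 p Y \<longleftrightarrow>
     (\<forall>i\<in>S. Y i \<noteq> {} \<and> Y i \<subseteq> S) \<and>
     (\<forall>i\<in>S. \<forall>j\<in>Y i. \<forall>eps\<in>{0<..eps0}. p eps i j > 0) \<and>
     (\<forall>i\<in>S. \<forall>j\<in>S - Y i. \<forall>eps\<in>{0<..eps0}. p eps i j = 0) \<and>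
     (\<forall>i\<in>S. \<forall>j\<in>S. \<exists>n::nat. \<exists>l::nat \<Rightarrow> nat. n \<ge> 1 \<and> l 0 = i \<and> l n = j \<and>
          (\<forall>m\<in>{1..n}. l m \<in> Y (l (m - 1))))"

definition expansion_D' :: "real \<Rightarrow> (real \<Rightarrow> nat \<Rightarrow> nat \<Rightarrow> real) \<Rightarrow> nat \<Rightarrow> nat \<Rightarrow> real \<Rightarrow> bool" where
  "expansion_D' eps0 p i j \<delta> \<longleftrightarrow>
     (\<exists>lm lp :: nat. \<exists>a :: nat \<Rightarrow> real. \<exists>G eps_ij :: real.
        lm \<le> lp \<and> a lm > 0 \<and> 0 < \<delta> \<and> \<delta> \<le> 1 \<and> 0 < G \<and> 0 < eps_ij \<and> eps_ij \<le> eps0 \<and>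
        (\<forall>eps\<in>{0<..eps_ij}.
           \<bar>p eps i j - (\<Sum>l=lm..lp. a l * eps ^ l)\<bar> \<le> G * eps powr (real lp + \<delta>)))"

definition condition_D' :: "nat set \<Rightarrow> real \<Rightarrow> (real \<Rightarrow> nat \<Rightarrow> nat \<Rightarrow> real) \<Rightarrow> (nat \<Rightarrow> nat set) \<Rightarrow> bool" where
  "condition_D' S eps0 p Y \<longleftrightarrow> (\<forall>i\<in>S. \<forall>j\<in>Y i. \<exists>\<delta>. expansion_D' eps0 p i j \<delta>)"

definition reduced_p :: "(real \<Rightarrow> nat \<Rightarrow> nat \<Rightarrow> real) \<Rightarrow> nat \<Rightarrow> real \<Rightarrow> nat \<Rightarrow> nat \<Rightarrow> real" where
  "reduced_p p r eps i j = p eps i j + p eps i r * (p eps r j / (1 - p eps r r))"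

definition reduced_Y :: "nat set \<Rightarrow> (nat \<Rightarrow> nat set) \<Rightarrow> nat \<Rightarrow> nat \<Rightarrow> nat set" where
  "reduced_Y S Y r i = {j \<in> S - {r}. j \<in> Y i \<or> (r \<in> Y i \<and> j \<in> Y r)}"

end

theory Submission
  imports Defs
begin



definition LT :: "real \<Rightarrow> (real \<Rightarrow> real) \<Rightarrow> nat \<Rightarrow> real \<Rightarrow> bool" where
  "LT d f m c \<longleftrightarrow> c > 0 \<and> (\<exists>G\<ge>0. eventually (\<lambda>e. \<bar>f e - c * e^m\<bar> \<le> G * e^m * e powr d) (at_right 0))"

lemma ev_small: "t > 0 \<Longrightarrow> eventually (\<lambda>e. 0 < e \<and> e < t) (at_right (0::real))"
  unfolding eventually_at_right_field by auto

lemma ev_powr_small: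
  assumes "0 < d" "K > 0"
  shows "eventually (\<lambda>e::real. 0<e \<and> e \<le> 1 \<and> e powr d \<le> K) (at_right 0)"
proof -
  have "min 1 (K powr (1/d)) > 0" using assms by simp
  from ev_small[OF this] show ?thesis
  proof (rule eventually_mono)
    fix e :: real assume h: "0 < e \<and> e < min 1 (K powr (1/d))"
    have "e powr d \<le> (K powr (1/d)) powr d"
      using h assms by (intro powr_mono2) auto
    also have "\<dots> = K" using assms by (simp add: powr_powr)
    finally show "0<e \<and> e \<le> 1 \<and> e powr d \<le> K" using h by auto
  qed
qed

lemma ev_01: "eventually (\<lambda>e::real. 0<e \<and> e \<le> 1) (at_right 0)"
  using ev_small[of 1] by (rule eventually_mono) auto

lemma e_le_powr: "0 < (e::real) \<Longrightarrow> e \<le> 1 \<Longrightarrow> d \<le> 1 \<Longrightarrow> e \<le> e powr d"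
  using powr_mono'[of d 1 e] by simp

lemma powr_le1: "0 < (e::real) \<Longrightarrow> e \<le> 1 \<Longrightarrow> 0 \<le> d \<Longrightarrow> e powr d \<le> 1"
  using powr_mono'[of 0 d e] by simp

lemma LT_cong:
  assumes "LT d f m c" "eventually (\<lambda>e. f e = g e) (at_right 0)"
  shows "LT d g m c"
proof -
  from assms(1) obtain G where G: "G \<ge> 0" "c > 0"
    "eventually (\<lambda>e. \<bar>f e - c * e^m\<bar> \<le> G * e^m * e powr d) (at_right 0)"
    unfolding LT_def by auto
  from eventually_conj[OF G(3) assms(2)]
  have "eventually (\<lambda>e. \<bar>g e - c * e^m\<bar> \<le> G * e^m * e powr d) (at_right 0)"
    by (rule eventually_mono) auto
  with G show ?thesis unfolding LT_def by auto
qed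

lemma LT_mono_d:
  assumes "LT d f m c" "0 < d'" "d' \<le> d"
  shows "LT d' f m c"
proof -
  from assms(1) obtain G where G: "G \<ge> 0" "c > 0"
    "eventually (\<lambda>e. \<bar>f e - c * e^m\<bar> \<le> G * e^m * e powr d) (at_right 0)"
    unfolding LT_def by auto
  from eventually_conj[OF G(3) ev_01]
  have "eventually (\<lambda>e. \<bar>f e - c * e^m\<bar> \<le> G * e^m * e powr d') (at_right 0)"
  proof (rule eventually_mono)
    fix e :: real assume h: "\<bar>f e - c * e^m\<bar> \<le> G * e^m * e powr d \<and> 0 < e \<and> e \<le> 1"
    have "e powr d \<le> e powr d'" using h assms by (intro powr_mono') auto
    hence "G * e^m * e powr d \<le> G * e^m * e powr d'"
      using h G by (intro mult_left_mono) auto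
    with h show "\<bar>f e - c * e^m\<bar> \<le> G * e^m * e powr d'" by linarith
  qed
  with G show ?thesis unfolding LT_def by auto
qed

lemma LT_add:
  assumes "LT d f a c1" "LT d g b c2" "a \<le> b" "0 < d" "d \<le> 1"
  shows "LT d (\<lambda>e. f e + g e) a (c1 + (if a = b then c2 else 0))"
proof -
  from assms(1) obtain G1 where G1: "G1 \<ge> 0" "c1 > 0"
    "eventually (\<lambda>e. \<bar>f e - c1 * e^a\<bar> \<le> G1 * e^a * e powr d) (at_right 0)"
    unfolding LT_def by auto
  from assms(2) obtain G2 where G2: "G2 \<ge> 0" "c2 > 0"
    "eventually (\<lambda>e. \<bar>g e - c2 * e^b\<bar> \<le> G2 * e^b * e powr d) (at_right 0)"
    unfolding LT_def by auto
  have "eventually (\<lambda>e. \<bar>(f e + g e) - (c1 + (if a = b then c2 else 0)) * e^a\<bar> \<le> (G1 + G2 + c2) * e^a * e powr d) (at_right 0)"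
    using eventually_conj[OF G1(3) eventually_conj[OF G2(3) ev_01]]
  proof (rule eventually_mono)
    fix e :: real assume h: "\<bar>f e - c1 * e^a\<bar> \<le> G1 * e^a * e powr d \<and>
       \<bar>g e - c2 * e^b\<bar> \<le> G2 * e^b * e powr d \<and> 0 < e \<and> e \<le> 1"
    have eb: "e^b \<le> e^a" using h assms(3) by (intro power_decreasing) auto
    have pd: "0 \<le> e powr d" by simp
    have t2: "G2 * e^b * e powr d \<le> G2 * e^a * e powr d"
      using eb G2 pd by (simp add: mult_left_mono mult_right_mono)
    have t3: "\<bar>(if a = b then 0 else c2 * e^b)\<bar> \<le> c2 * e^a * e powr d"
    proof (cases "a = b")
      case False
      hence "Suc a \<le> b" using assms(3) by simp
      hence "e^b \<le> e^(Suc a)" using h by (intro power_decreasing) auto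
      also have "\<dots> = e^a * e" by simp
      also have "\<dots> \<le> e^a * e powr d" using h assms
        by (intro mult_left_mono e_le_powr) auto
      finally show ?thesis using False G2 h by (simp add: mult.assoc mult_left_mono)
    qed (use G2 h in auto)
    have eq: "(f e + g e) - (c1 + (if a = b then c2 else 0)) * e^a
        = (f e - c1 * e^a) + (g e - c2 * e^b) + (if a = b then 0 else c2 * e^b)"
      by (auto simp: algebra_simps)
    have "\<bar>(f e + g e) - (c1 + (if a = b then c2 else 0)) * e^a\<bar>
        \<le> \<bar>f e - c1 * e^a\<bar> + \<bar>g e - c2 * e^b\<bar> + \<bar>(if a = b then 0 else c2 * e^b)\<bar>"
      unfolding eq by linarith
    also have "\<dots> \<le> G1 * e^a * e powr d + G2 * e^a * e powr d + c2 * e^a * e powr d"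
      using h t2 t3 by linarith
    also have "\<dots> = (G1 + G2 + c2) * e^a * e powr d" by (simp add: algebra_simps)
    finally show "\<bar>(f e + g e) - (c1 + (if a = b then c2 else 0)) * e^a\<bar> \<le> (G1 + G2 + c2) * e^a * e powr d" .
  qed
  moreover have "c1 + (if a = b then c2 else 0) > 0" using G1 G2 by auto
  ultimately show ?thesis unfolding LT_def using G1 G2
    by (intro conjI exI[of _ "G1 + G2 + c2"]) auto
qed

lemma LT_add_ex:
  assumes "LT d f a c1" "LT d g b c2" "0 < d" "d \<le> 1"
  shows "\<exists>m c. LT d (\<lambda>e. f e + g e) m c"
proof (cases "a \<le> b")
  case True thus ?thesis using LT_add[OF assms(1,2) True assms(3,4)] by blast
next
  case False
  hence "b \<le> a" by simp
  from LT_add[OF assms(2,1) this assms(3,4)] show ?thesis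
    by (auto simp: add.commute)
qed

lemma LT_sum:
  assumes "finite A" "A \<noteq> {}" "\<forall>k\<in>A. \<exists>m c. LT d (f k) m c" "0 < d" "d \<le> 1"
  shows "\<exists>m c. LT d (\<lambda>e. \<Sum>k\<in>A. f k e) m c"
  using assms(1,2,3)
proof (induction A rule: finite_ne_induct)
  case (singleton x) thus ?case by simp
next
  case (insert x F)
  then obtain m1 c1 m2 c2 where "LT d (f x) m1 c1" "LT d (\<lambda>e. \<Sum>k\<in>F. f k e) m2 c2" by blast
  from LT_add_ex[OF this assms(4,5)] show ?case using insert by simp
qed



lemma LT_mult:
  assumes "LT d f a c1" "LT d g b c2" "0 < d" "d \<le> 1"
  shows "LT d (\<lambda>e. f e * g e) (a + b) (c1 * c2)"
proof -
  from assms(1) obtain G1 where G1: "G1 \<ge> 0" "c1 > 0"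
    "eventually (\<lambda>e. \<bar>f e - c1 * e^a\<bar> \<le> G1 * e^a * e powr d) (at_right 0)"
    unfolding LT_def by auto
  from assms(2) obtain G2 where G2: "G2 \<ge> 0" "c2 > 0"
    "eventually (\<lambda>e. \<bar>g e - c2 * e^b\<bar> \<le> G2 * e^b * e powr d) (at_right 0)"
    unfolding LT_def by auto
  have "eventually (\<lambda>e. \<bar>f e * g e - (c1 * c2) * e^(a+b)\<bar> \<le> (G1 * (c2 + G2) + c1 * G2) * e^(a+b) * e powr d) (at_right 0)"
    using eventually_conj[OF G1(3) eventually_conj[OF G2(3) ev_01]]
  proof (rule eventually_mono)
    fix e :: real assume h: "\<bar>f e - c1 * e^a\<bar> \<le> G1 * e^a * e powr d \<and>
       \<bar>g e - c2 * e^b\<bar> \<le> G2 * e^b * e powr d \<and> 0 < e \<and> e \<le> 1"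
    have pd: "0 \<le> e powr d" "e powr d \<le> 1" using h assms powr_le1[of e d] by auto
    have ea: "0 < e^a" "0 < e^b" using h by auto
    have "G2 * e^b * e powr d \<le> G2 * e^b" using pd G2 ea
      by (simp add: mult_left_le)
    moreover have "\<bar>g e\<bar> \<le> \<bar>g e - c2 * e^b\<bar> + \<bar>c2 * e^b\<bar>" by (metis abs_triangle_ineq diff_add_cancel)
    moreover have "\<bar>c2 * e^b\<bar> = c2 * e^b" using G2 ea by simp
    ultimately have "\<bar>g e\<bar> \<le> c2 * e^b + G2 * e^b" using h by linarith
    hence gb: "\<bar>g e\<bar> \<le> (c2 + G2) * e^b" by (simp add: distrib_right)
    have eq: "f e * g e - (c1 * c2) * e^(a+b) = (f e - c1 * e^a) * g e + c1 * e^a * (g e - c2 * e^b)"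
      by (simp add: algebra_simps power_add)
    have "\<bar>(f e - c1 * e^a) * g e\<bar> \<le> (G1 * e^a * e powr d) * ((c2 + G2) * e^b)"
      unfolding abs_mult using h gb by (intro mult_mono) auto
    moreover have "\<bar>c1 * e^a * (g e - c2 * e^b)\<bar> \<le> c1 * e^a * (G2 * e^b * e powr d)"
      unfolding abs_mult using h G1 ea by (intro mult_mono) auto
    ultimately have "\<bar>f e * g e - (c1 * c2) * e^(a+b)\<bar> \<le> (G1 * e^a * e powr d) * ((c2 + G2) * e^b) + c1 * e^a * (G2 * e^b * e powr d)"
      unfolding eq by linarith
    also have "\<dots> = (G1 * (c2 + G2) + c1 * G2) * e^(a+b) * e powr d"
      by (simp add: algebra_simps power_add)
    finally show "\<bar>f e * g e - (c1 * c2) * e^(a+b)\<bar> \<le> (G1 * (c2 + G2) + c1 * G2) * e^(a+b) * e powr d" .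
  qed
  thus ?thesis unfolding LT_def using G1 G2
    by (intro conjI exI[of _ "G1 * (c2 + G2) + c1 * G2"]) auto
qed


lemma LT_div0:
  assumes "LT d f (k + b) c1" "LT d h b c2" "0 < d" "d \<le> 1"
  shows "LT d (\<lambda>e. f e / h e) k (c1 / c2)"
proof -
  from assms(1) obtain G1 where G1: "G1 \<ge> 0" "c1 > 0"
    "eventually (\<lambda>e. \<bar>f e - c1 * e^(k+b)\<bar> \<le> G1 * e^(k+b) * e powr d) (at_right 0)"
    unfolding LT_def by auto
  from assms(2) obtain G2 where G2: "G2 \<ge> 0" "c2 > 0"
    "eventually (\<lambda>e. \<bar>h e - c2 * e^b\<bar> \<le> G2 * e^b * e powr d) (at_right 0)"
    unfolding LT_def by auto
  define K where "K = 2 * (c2 * G1 + c1 * G2) / c2^2"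
  have K0: "K \<ge> 0" unfolding K_def using G1 G2 by auto
  have "c2 / (2 * (G2 + 1)) > 0" using G2 by auto
  note ev = ev_powr_small[OF assms(3) this]
  have "eventually (\<lambda>e. \<bar>f e / h e - (c1 / c2) * e^k\<bar> \<le> K * e^k * e powr d) (at_right 0)"
    using eventually_conj[OF G1(3) eventually_conj[OF G2(3) ev]]
  proof (rule eventually_mono)
    fix e :: real assume H: "\<bar>f e - c1 * e^(k+b)\<bar> \<le> G1 * e^(k+b) * e powr d \<and>
       \<bar>h e - c2 * e^b\<bar> \<le> G2 * e^b * e powr d \<and> 0 < e \<and> e \<le> 1 \<and> e powr d \<le> c2 / (2 * (G2 + 1))"
    have ea: "0 < e^k" "0 < e^b" using H by auto
    have pd: "0 \<le> e powr d" by simp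
    have "G2 * e powr d \<le> (G2 + 1) * e powr d" using pd by (simp add: algebra_simps)
    also have "\<dots> \<le> (G2 + 1) * (c2 / (2 * (G2 + 1)))" using H G2 by (intro mult_left_mono) auto
    also have "\<dots> = c2 / 2" using G2 by (simp add: field_simps)
    finally have g2: "G2 * e powr d \<le> c2 / 2" .
    have "(G2 * e powr d) * e^b \<le> c2 / 2 * e^b" using g2 ea by (intro mult_right_mono) auto
    moreover have "G2 * e^b * e powr d = (G2 * e powr d) * e^b" by (simp only: ac_simps)
    moreover have "\<bar>h e - c2 * e^b\<bar> \<le> G2 * e^b * e powr d" using H by blast
    moreover have "c2 * e^b = c2 / 2 * e^b + c2 / 2 * e^b" by simp
    ultimately have hlow: "h e \<ge> c2 / 2 * e^b" by linarith
    have "c2 / 2 * e^b > 0" using G2 ea by simp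
    hence hpos: "h e > 0" using hlow by linarith
    have eq: "f e / h e - (c1 / c2) * e^k = (c2 * (f e - c1 * e^(k+b)) - c1 * e^k * (h e - c2 * e^b)) / (c2 * h e)"
      using hpos G2 by (simp add: field_simps power_add)
    have num: "\<bar>c2 * (f e - c1 * e^(k+b)) - c1 * e^k * (h e - c2 * e^b)\<bar> \<le> (c2 * G1 + c1 * G2) * e^(k+b) * e powr d"
    proof -
      have "\<bar>c2 * (f e - c1 * e^(k+b))\<bar> \<le> c2 * (G1 * e^(k+b) * e powr d)"
        unfolding abs_mult using H G2 by (intro mult_mono) auto
      moreover have "\<bar>c1 * e^k * (h e - c2 * e^b)\<bar> \<le> c1 * e^k * (G2 * e^b * e powr d)"
        unfolding abs_mult using H G1 ea by (intro mult_mono) auto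
      moreover have "c2 * (G1 * e^(k+b) * e powr d) + c1 * e^k * (G2 * e^b * e powr d)
          = (c2 * G1 + c1 * G2) * e^(k+b) * e powr d"
        by (simp add: algebra_simps power_add)
      ultimately show ?thesis by linarith
    qed
    have den: "c2 * h e \<ge> c2 * (c2 / 2 * e^b)" using hlow G2 by (intro mult_left_mono) auto
    have den0: "c2 * (c2 / 2 * e^b) > 0" using G2 ea by auto
    have "\<bar>f e / h e - (c1 / c2) * e^k\<bar> = \<bar>c2 * (f e - c1 * e^(k+b)) - c1 * e^k * (h e - c2 * e^b)\<bar> / (c2 * h e)"
      unfolding eq using hpos G2 by (simp add: abs_div)
    also have "\<dots> \<le> ((c2 * G1 + c1 * G2) * e^(k+b) * e powr d) / (c2 * (c2 / 2 * e^b))"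
      using num den den0 by (intro frac_le) auto
    also have "\<dots> = K * e^k * e powr d"
    proof -
      have "e \<noteq> 0" using H by simp
      hence nz: "e^b \<noteq> 0" "c2 \<noteq> 0" using G2 by auto
      show ?thesis unfolding K_def using nz by (simp add: field_simps power2_eq_square power_add)
    qed
    finally show "\<bar>f e / h e - (c1 / c2) * e^k\<bar> \<le> K * e^k * e powr d" .
  qed
  thus ?thesis unfolding LT_def using G1 G2 K0
    by (intro conjI exI[of _ K]) auto
qed

lemma LT_div:
  assumes "LT d f a c1" "LT d h b c2" "b \<le> a" "0 < d" "d \<le> 1"
  shows "LT d (\<lambda>e. f e / h e) (a - b) (c1 / c2)"
  using LT_div0[of d f "a - b" b c1 h c2] assms by simp

lemma LT_le_exp:
  assumes "LT d f a c1" "LT d h b c2" "eventually (\<lambda>e. f e \<le> h e) (at_right 0)" "0 < d" "d \<le> 1"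
  shows "b \<le> a"
proof (rule ccontr)
  assume "\<not> b \<le> a"
  hence ab: "Suc a \<le> b" by simp
  from assms(1) obtain G1 where G1: "G1 \<ge> 0" "c1 > 0"
    "eventually (\<lambda>e. \<bar>f e - c1 * e^a\<bar> \<le> G1 * e^a * e powr d) (at_right 0)"
    unfolding LT_def by auto
  from assms(2) obtain G2 where G2: "G2 \<ge> 0" "c2 > 0"
    "eventually (\<lambda>e. \<bar>h e - c2 * e^b\<bar> \<le> G2 * e^b * e powr d) (at_right 0)"
    unfolding LT_def by auto
  have "c1 / (2 * (G1 + 1)) > 0" using G1 by auto
  note ev = ev_powr_small[OF assms(4) this]
  have "c1 / (2 * (c2 + G2)) > 0" using G1 G2 by auto
  note ev2 = ev_small[OF this]
  have "eventually (\<lambda>e. False) (at_right (0::real))"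
    using eventually_conj[OF G1(3) eventually_conj[OF G2(3) eventually_conj[OF ev eventually_conj[OF ev2 assms(3)]]]]
  proof (rule eventually_mono)
    fix e :: real assume H: "\<bar>f e - c1 * e^a\<bar> \<le> G1 * e^a * e powr d \<and>
       \<bar>h e - c2 * e^b\<bar> \<le> G2 * e^b * e powr d \<and> (0 < e \<and> e \<le> 1 \<and> e powr d \<le> c1 / (2 * (G1 + 1)))
       \<and> (0 < e \<and> e < c1 / (2 * (c2 + G2))) \<and> f e \<le> h e"
    have ea: "0 < e^a" "0 < e^b" using H by auto
    have pd: "0 \<le> e powr d" "e powr d \<le> 1" using H assms powr_le1[of e d] by auto
    have "G1 * e powr d \<le> (G1 + 1) * e powr d" using pd by (simp add: algebra_simps)
    also have "\<dots> \<le> (G1 + 1) * (c1 / (2 * (G1 + 1)))" using H G1 by (intro mult_left_mono) auto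
    also have "\<dots> = c1 / 2" using G1 by (simp add: field_simps)
    finally have g1: "G1 * e powr d \<le> c1 / 2" .
    have "G1 * e^a * e powr d \<le> c1 / 2 * e^a" using g1 ea
      by (metis mult.commute mult.left_commute mult_right_mono less_imp_le)
    moreover have "- (f e - c1 * e^a) \<le> G1 * e^a * e powr d" using H by (intro abs_le_D2) blast
    moreover have "c1 * e^a = c1 / 2 * e^a + c1 / 2 * e^a" by simp
    ultimately have flow: "f e \<ge> c1 / 2 * e^a" by linarith
    have "G2 * e^b * e powr d \<le> G2 * e^b * 1" using pd G2 ea by (intro mult_left_mono) auto
    moreover have "\<bar>h e - c2 * e^b\<bar> \<le> G2 * e^b * e powr d" using H by blast
    ultimately have "h e \<le> c2 * e^b + G2 * e^b" by linarith
    hence hup: "h e \<le> (c2 + G2) * e^b" by (simp only: distrib_right)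
    have "e^b \<le> e^(Suc a)" using H ab by (intro power_decreasing) auto
    hence "(c2 + G2) * e^b \<le> (c2 + G2) * (e * e^a)" using G2 by (intro mult_left_mono) auto
    also have "\<dots> < (c1 / 2) * e^a"
    proof -
      have cg: "0 < 2 * (c2 + G2)" using G1 G2 by simp
      have "e < c1 / (2 * (c2 + G2))" using H by blast
      hence "e * (2 * (c2 + G2)) < c1" using cg by (simp only: pos_less_divide_eq)
      moreover have "(c2 + G2) * e = (e * (2 * (c2 + G2))) / 2" by simp
      ultimately have "(c2 + G2) * e < c1 / 2" by linarith
      hence "((c2 + G2) * e) * e^a < (c1 / 2) * e^a" using ea by (intro mult_strict_right_mono) auto
      thus ?thesis by (simp only: mult.assoc)
    qed
    finally show False using flow hup H by linarith
  qed
  thus False by (simp add: trivial_limit_at_right_real)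
qed



lemma powr_nat_add: "0 < (e::real) \<Longrightarrow> e powr (real m + d) = e^m * e powr d"
  by (simp add: powr_add powr_realpow)

lemma LT_to_exp:
  assumes "LT d (\<lambda>e. q e i j) m c" "0 < d" "d \<le> 1" "0 < eps0"
  shows "expansion_D' eps0 q i j d"
proof -
  from assms(1) obtain G where G: "G \<ge> 0" "c > 0"
    "eventually (\<lambda>e. \<bar>q e i j - c * e^m\<bar> \<le> G * e^m * e powr d) (at_right 0)"
    unfolding LT_def by auto
  from G(3) obtain b where b: "b > 0" "\<forall>y>0. y < b \<longrightarrow> \<bar>q y i j - c * y^m\<bar> \<le> G * y^m * y powr d"
    unfolding eventually_at_right_field by auto
  define t where "t = min (b/2) eps0"
  have t: "0 < t" "t \<le> eps0" "t < b" using b assms unfolding t_def by auto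
  have "\<forall>e\<in>{0<..t}. \<bar>q e i j - (\<Sum>l=m..m. c * e ^ l)\<bar> \<le> (G + 1) * e powr (real m + d)"
  proof
    fix e assume e: "e \<in> {0<..t}"
    hence e0: "0 < e" "e < b" using t by auto
    have "\<bar>q e i j - (\<Sum>l=m..m. c * e ^ l)\<bar> = \<bar>q e i j - c * e^m\<bar>" by simp
    also have "\<dots> \<le> G * e^m * e powr d" using b e0 by blast
    also have "\<dots> \<le> (G + 1) * (e^m * e powr d)" using e0 by (simp add: algebra_simps)
    also have "\<dots> = (G + 1) * e powr (real m + d)" using e0 by (simp add: powr_nat_add)
    finally show "\<bar>q e i j - (\<Sum>l=m..m. c * e ^ l)\<bar> \<le> (G + 1) * e powr (real m + d)" .
  qed
  thus ?thesis unfolding expansion_D'_def using t G assms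
    by (intro exI[of _ m] exI[of _ m] exI[of _ "\<lambda>_. c"] exI[of _ "G + 1"] exI[of _ t]) auto
qed

lemma exp_to_LT:
  assumes "expansion_D' eps0 q i j d"
  shows "\<exists>m c. LT d (\<lambda>e. q e i j) m c"
proof -
  from assms obtain lm lp a G t where H: "lm \<le> lp" "a lm > 0" "0 < d" "d \<le> 1" "0 < G" "0 < t" "t \<le> eps0"
    "\<forall>e\<in>{0<..t}. \<bar>q e i j - (\<Sum>l=lm..lp. a l * e ^ l)\<bar> \<le> G * e powr (real lp + d)"
    unfolding expansion_D'_def by blast
  define A where "A = (\<Sum>l\<in>{Suc lm..lp}. \<bar>a l\<bar>)"
  have A0: "A \<ge> 0" unfolding A_def by (simp add: sum_nonneg)
  have "min t 1 > 0" using H by simp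
  have "eventually (\<lambda>e. \<bar>q e i j - a lm * e^lm\<bar> \<le> (A + G) * e^lm * e powr d) (at_right 0)"
    using ev_small[OF \<open>min t 1 > 0\<close>]
  proof (rule eventually_mono)
    fix e :: real assume e: "0 < e \<and> e < min t 1"
    have pd: "0 \<le> e powr d" by simp
    have key: "e^l \<le> e^lm * e powr d" if "l \<in> {Suc lm..lp}" for l
    proof -
      have "e^l \<le> e^(Suc lm)" using that e by (intro power_decreasing) auto
      also have "\<dots> = e^lm * e" by simp
      also have "\<dots> \<le> e^lm * e powr d" using e H by (intro mult_left_mono e_le_powr) auto
      finally show ?thesis .
    qed
    have split: "(\<Sum>l=lm..lp. a l * e ^ l) = a lm * e^lm + (\<Sum>l=Suc lm..lp. a l * e ^ l)"
      using H(1) by (simp add: sum.atLeast_Suc_atMost)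
    have "\<bar>\<Sum>l=Suc lm..lp. a l * e ^ l\<bar> \<le> (\<Sum>l=Suc lm..lp. \<bar>a l\<bar> * (e^lm * e powr d))"
    proof -
      have "\<bar>\<Sum>l=Suc lm..lp. a l * e ^ l\<bar> \<le> (\<Sum>l=Suc lm..lp. \<bar>a l * e ^ l\<bar>)" by (rule sum_abs)
      also have "\<dots> \<le> (\<Sum>l=Suc lm..lp. \<bar>a l\<bar> * (e^lm * e powr d))"
      proof (rule sum_mono)
        fix l assume l: "l \<in> {Suc lm..lp}"
        have "\<bar>a l * e ^ l\<bar> = \<bar>a l\<bar> * e^l" using e by (simp add: abs_mult)
        also have "\<dots> \<le> \<bar>a l\<bar> * (e^lm * e powr d)" using key[OF l] by (intro mult_left_mono) auto
        finally show "\<bar>a l * e ^ l\<bar> \<le> \<bar>a l\<bar> * (e^lm * e powr d)" .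
      qed
      finally show ?thesis .
    qed
    also have "\<dots> = A * (e^lm * e powr d)" unfolding A_def by (simp add: sum_distrib_right)
    finally have s1: "\<bar>\<Sum>l=Suc lm..lp. a l * e ^ l\<bar> \<le> A * (e^lm * e powr d)" .
    have "e \<in> {0<..t}" using e by auto
    hence s2: "\<bar>q e i j - (\<Sum>l=lm..lp. a l * e ^ l)\<bar> \<le> G * (e^lp * e powr d)"
      using H(8) e by (simp add: powr_nat_add)
    have "e^lp \<le> e^lm" using e H by (intro power_decreasing) auto
    hence "G * (e^lp * e powr d) \<le> G * (e^lm * e powr d)" using H pd
      by (intro mult_left_mono mult_right_mono) auto
    hence "\<bar>q e i j - a lm * e^lm\<bar> \<le> A * (e^lm * e powr d) + G * (e^lm * e powr d)"
      using s1 s2 split by (smt (verit))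
    thus "\<bar>q e i j - a lm * e^lm\<bar> \<le> (A + G) * e^lm * e powr d" by (simp add: algebra_simps)
  qed
  thus ?thesis unfolding LT_def using H A0 by (intro exI[of _ lm] exI[of _ "a lm"] conjI exI[of _ "A + G"]) auto
qed


definition rel :: "(nat \<Rightarrow> nat set) \<Rightarrow> (nat \<times> nat) set" where
  "rel Y = {(a,b). b \<in> Y a}"

lemma path_to_trancl:
  fixes n :: nat
  shows "(\<forall>m\<in>{1..n}. l m \<in> Y (l (m-1))) \<Longrightarrow> 1 \<le> n \<Longrightarrow> (l 0, l n) \<in> (rel Y)^+"
proof (induction n)
  case 0 thus ?case by simp
next
  case (Suc k)
  have st: "(l k, l (Suc k)) \<in> rel Y" using Suc.prems(1) unfolding rel_def by force
  show ?case
  proof (cases "k = 0")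
    case True thus ?thesis using st by auto
  next
    case False
    hence "(l 0, l k) \<in> (rel Y)^+" using Suc.IH Suc.prems by auto
    thus ?thesis using st by (rule trancl_into_trancl)
  qed
qed

lemma trancl_to_path:
  assumes "(a,b) \<in> (rel Y)^+"
  shows "\<exists>(n::nat) l. n \<ge> 1 \<and> l 0 = a \<and> l n = b \<and> (\<forall>m\<in>{1..n}. l m \<in> Y (l (m-1)))"
  using assms
proof (induction rule: trancl_induct)
  case (base y)
  hence "y \<in> Y a" unfolding rel_def by auto
  define l where "l = (\<lambda>k::nat. if k = 0 then a else y)"
  have "(1::nat) \<ge> 1 \<and> l 0 = a \<and> l 1 = y \<and> (\<forall>m\<in>{1..1}. l m \<in> Y (l (m-1)))"
    unfolding l_def using \<open>y \<in> Y a\<close> by auto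
  thus ?case by blast
next
  case (step y z)
  then obtain n :: nat and l where nl: "n \<ge> 1" "l 0 = a" "l n = y" "\<forall>m\<in>{1..n}. l m \<in> Y (l (m-1))" by blast
  define l' where "l' = (\<lambda>k. if k \<le> n then l k else z)"
  have "\<forall>m\<in>{1..Suc n}. l' m \<in> Y (l' (m-1))"
  proof
    fix m assume m: "m \<in> {1..Suc n}"
    show "l' m \<in> Y (l' (m-1))"
    proof (cases "m = Suc n")
      case True thus ?thesis using step(2) nl unfolding l'_def rel_def by auto
    next
      case False thus ?thesis using m nl unfolding l'_def by auto
    qed
  qed
  moreover have "l' 0 = a" "l' (Suc n) = z" using nl unfolding l'_def by auto
  ultimately show ?case by (intro exI[of _ "Suc n"] exI[of _ l']) auto
qed

lemma trancl_S:
  assumes "(a,b) \<in> (rel Y)^+" "\<forall>i\<in>S. Y i \<subseteq> S" "a \<in> S"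
  shows "b \<in> S"
  using assms(1)
proof (induction rule: trancl_induct)
  case (base y) thus ?case using assms unfolding rel_def by auto
next
  case (step y z) thus ?case using assms unfolding rel_def by auto
qed

lemma reduce_trancl:
  assumes "r \<in> S" "\<forall>i\<in>S. Y i \<subseteq> S" "(a,b) \<in> (rel Y)^+" "a \<in> S" "a \<noteq> r"
  shows "(b \<noteq> r \<longrightarrow> (a,b) \<in> (rel (reduced_Y S Y r))^+) \<and>
         (b = r \<longrightarrow> (\<exists>d. d \<in> S \<and> d \<noteq> r \<and> (a,d) \<in> (rel (reduced_Y S Y r))^* \<and> r \<in> Y d))"
  using assms(3)
proof (induction rule: trancl_induct)
  case (base y)
  hence y: "y \<in> Y a" unfolding rel_def by auto
  hence "y \<in> S" using assms by auto
  thus ?case using y assms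
    by (auto simp: rel_def reduced_Y_def intro!: r_into_trancl)
next
  case (step y z)
  have yS: "y \<in> S" using trancl_S[OF step(1) assms(2,4)] .
  have z: "z \<in> Y y" using step(2) unfolding rel_def by auto
  have zS: "z \<in> S" using z yS assms by auto
  show ?case
  proof (cases "y = r")
    case False
    hence yt: "(a,y) \<in> (rel (reduced_Y S Y r))^+" using step(3) by auto
    show ?thesis
    proof (cases "z = r")
      case False
      have "(y,z) \<in> rel (reduced_Y S Y r)" using False zS z unfolding rel_def reduced_Y_def by auto
      with yt False show ?thesis by (auto intro: trancl_into_trancl)
    next
      case True thus ?thesis using yt \<open>y \<noteq> r\<close> yS z by (auto intro: trancl_into_rtrancl)
    qed
  next
    case True
    then obtain d where d: "d \<in> S" "d \<noteq> r" "(a,d) \<in> (rel (reduced_Y S Y r))^*" "r \<in> Y d"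
      using step(3) by auto
    show ?thesis
    proof (cases "z = r")
      case False
      have "(d,z) \<in> rel (reduced_Y S Y r)" using False zS z True d unfolding rel_def reduced_Y_def by auto
      with d(3) False show ?thesis by (auto intro: rtrancl_into_trancl1)
    next
      case True thus ?thesis using d by auto
    qed
  qed
qed

lemma leave_r:
  assumes "(r,s) \<in> (rel Y)^+" "s \<noteq> r"
  shows "\<exists>x\<in>Y r. x \<noteq> r"
  using assms
proof (induction rule: trancl_induct)
  case (base y) thus ?case unfolding rel_def by auto
next
  case (step y z)
  show ?case
  proof (cases "y = r")
    case True thus ?thesis using step unfolding rel_def by auto
  next
    case False thus ?thesis using step by auto
  qed
qed




theorem theorem1:
  fixes N :: nat and eps0 :: real
    and p :: "real \<Rightarrow> nat \<Rightarrow> nat \<Rightarrow> real"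
    and Y :: "nat \<Rightarrow> nat set"
    and \<delta> :: "nat \<Rightarrow> nat \<Rightarrow> real"
  assumes "N \<ge> 2"
    and "0 < eps0" and "eps0 \<le> 1"
    and "stochastic_family {1..N} eps0 p"
    and "condition_A {1..N} eps0 p Y"
    and "\<forall>i\<in>{1..N}. \<forall>j\<in>Y i. expansion_D' eps0 p i j (\<delta> i j)"
  shows "\<forall>r\<in>{1..N}.
           condition_A ({1..N} - {r}) eps0 (reduced_p p r) (reduced_Y {1..N} Y r) \<and>
           condition_D' ({1..N} - {r}) eps0 (reduced_p p r) (reduced_Y {1..N} Y r) \<and>
           (\<forall>i\<in>{1..N} - {r}. \<forall>j\<in>reduced_Y {1..N} Y r i.
              \<exists>d. d \<ge> Min {\<delta> i' j' | i' j'. i' \<in> {1..N} \<and> j' \<in> Y i'} \<and>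
                  expansion_D' eps0 (reduced_p p r) i j d)"
proof -
  define S where "S = {1..N}"
  have finS: "finite S" unfolding S_def by simp
  have YS: "\<forall>i\<in>S. Y i \<noteq> {} \<and> Y i \<subseteq> S"
    and pos: "\<forall>i\<in>S. \<forall>j\<in>Y i. \<forall>eps\<in>{0<..eps0}. p eps i j > 0"
    and zero: "\<forall>i\<in>S. \<forall>j\<in>S - Y i. \<forall>eps\<in>{0<..eps0}. p eps i j = 0"
    and irr: "\<forall>i\<in>S. \<forall>j\<in>S. \<exists>n::nat. \<exists>l::nat \<Rightarrow> nat. n \<ge> 1 \<and> l 0 = i \<and> l n = j \<and>
          (\<forall>m\<in>{1..n}. l m \<in> Y (l (m - 1)))"
    using assms(5) unfolding condition_A_def S_def by auto
  have YS': "\<forall>i\<in>S. Y i \<subseteq> S" using YS by auto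
  have nonneg: "\<forall>eps\<in>{0<..eps0}. \<forall>i\<in>S. \<forall>j\<in>S. 0 \<le> p eps i j"
    and sum1: "\<forall>eps\<in>{0<..eps0}. \<forall>i\<in>S. (\<Sum>j\<in>S. p eps i j) = 1"
    using assms(4) unfolding stochastic_family_def S_def by auto
  define D where "D = {\<delta> i' j' | i' j'. i' \<in> {1..N} \<and> j' \<in> Y i'}"
  define d0 where "d0 = Min D"
  have D_eq: "D = (\<lambda>(i,j). \<delta> i j) ` (SIGMA i:S. Y i)" unfolding D_def S_def by (auto; blast)
  have "(SIGMA i:S. Y i) \<subseteq> S \<times> S" using YS by auto
  hence "finite (SIGMA i:S. Y i)" using finS by (meson finite_SigmaI finite_subset)
  hence finD: "finite D" unfolding D_eq by simp
  have "1 \<in> S" unfolding S_def using assms(1) by simp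
  then obtain j1 where "j1 \<in> Y 1" using YS by blast
  hence "\<delta> 1 j1 \<in> D" unfolding D_def using assms(1) by (intro CollectI exI[of _ 1] exI[of _ j1]) auto
  hence neD: "D \<noteq> {}" by auto
  have Dprop: "\<forall>x\<in>D. 0 < x \<and> x \<le> 1"
    using assms(6) unfolding D_def expansion_D'_def by auto
  have d0pos: "0 < d0" "d0 \<le> 1" using Min_in[OF finD neD] Dprop unfolding d0_def by auto
  have d0le: "d0 \<le> \<delta> i j" if "i \<in> S" "j \<in> Y i" for i j
    unfolding d0_def using that finD by (intro Min_le) (auto simp: D_def S_def)
  have LTp: "\<exists>m c. LT d0 (\<lambda>e. p e i j) m c" if "i \<in> S" "j \<in> Y i" for i j
  proof -
    have "expansion_D' eps0 p i j (\<delta> i j)" using assms(6) that unfolding S_def by auto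
    then obtain m c where "LT (\<delta> i j) (\<lambda>e. p e i j) m c" using exp_to_LT by blast
    thus ?thesis using LT_mono_d d0pos d0le[OF that] by blast
  qed
  have evS: "eventually (\<lambda>e. e \<in> {0<..eps0}) (at_right 0)"
    using ev_small[OF assms(2)] by (rule eventually_mono) auto
  show ?thesis
  proof
    fix r assume rS0: "r \<in> {1..N}"
    hence rS: "r \<in> S" unfolding S_def .
    define RY where "RY = reduced_Y S Y r"
    obtain s where s: "s \<in> S" "s \<noteq> r"
    proof (cases "r = 1")
      case True thus ?thesis using that[of 2] assms(1) unfolding S_def by auto
    next
      case False thus ?thesis using that[of 1] assms(1) unfolding S_def by auto
    qed
    obtain n :: nat and l where nl: "n \<ge> 1" "l 0 = r" "l n = s" "\<forall>m\<in>{1..n}. l m \<in> Y (l (m - 1))"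
      using irr rS s by blast
    have "(r, s) \<in> (rel Y)^+" using path_to_trancl[OF nl(4) nl(1)] nl by simp
    then obtain x where x: "x \<in> Y r" "x \<noteq> r" using leave_r s by blast
    have xS: "x \<in> S" using x YS rS by auto
    have prr: "p e r r < 1" if e: "e \<in> {0<..eps0}" for e
    proof -
      have "(\<Sum>j\<in>S. p e r j) = p e r r + (\<Sum>j\<in>S - {r}. p e r j)"
        using finS rS by (simp add: sum.remove)
      moreover have "(\<Sum>j\<in>S - {r}. p e r j) \<ge> p e r x"
        using finS xS x nonneg e rS by (intro member_le_sum) auto
      moreover have "(\<Sum>j\<in>S. p e r j) = 1" using sum1 e rS by auto
      ultimately have "1 \<ge> p e r r + p e r x" by linarith
      moreover have "p e r x > 0" using pos rS x e by auto
      ultimately show ?thesis by linarith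
    qed

    have SS: "{1..N} - {r} = S - {r}" "reduced_Y {1..N} Y r = RY" unfolding S_def RY_def by auto
    have RYsub: "RY i \<subseteq> S - {r}" for i unfolding RY_def reduced_Y_def by auto
    have hsum: "1 - p e r r = (\<Sum>k\<in>Y r - {r}. p e r k)" if e: "e \<in> {0<..eps0}" for e
    proof -
      have "(\<Sum>j\<in>S. p e r j) = p e r r + (\<Sum>j\<in>S - {r}. p e r j)"
        using finS rS by (simp add: sum.remove)
      moreover have "(\<Sum>j\<in>S - {r}. p e r j) = (\<Sum>k\<in>Y r - {r}. p e r k)"
        using finS YS rS zero e by (intro sum.mono_neutral_right) auto
      ultimately show ?thesis using sum1 e rS by auto
    qed
    have hge: "p e r j \<le> 1 - p e r r" if e: "e \<in> {0<..eps0}" and j: "j \<in> S - {r}" for e j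
    proof -
      have "(\<Sum>j\<in>S. p e r j) = p e r r + (\<Sum>j\<in>S - {r}. p e r j)"
        using finS rS by (simp add: sum.remove)
      moreover have "(\<Sum>j\<in>S - {r}. p e r j) \<ge> p e r j"
        using finS j nonneg e rS by (intro member_le_sum) auto
      ultimately show ?thesis using sum1 e rS by auto
    qed
    obtain mh ch where LTh: "LT d0 (\<lambda>e. 1 - p e r r) mh ch"
    proof -
      have "\<exists>m c. LT d0 (\<lambda>e. \<Sum>k\<in>Y r - {r}. p e r k) m c"
        using finS YS rS x LTp d0pos by (intro LT_sum) (auto intro: finite_subset)
      then obtain m c where "LT d0 (\<lambda>e. \<Sum>k\<in>Y r - {r}. p e r k) m c" by blast
      moreover have "eventually (\<lambda>e. (\<Sum>k\<in>Y r - {r}. p e r k) = 1 - p e r r) (at_right 0)"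
        using evS by (rule eventually_mono) (simp add: hsum)
      ultimately have "LT d0 (\<lambda>e. 1 - p e r r) m c" by (rule LT_cong)
      thus ?thesis using that by blast
    qed
    have LTq: "\<exists>m c. LT d0 (\<lambda>e. p e r j / (1 - p e r r)) m c" if j: "j \<in> Y r" "j \<noteq> r" for j
    proof -
      obtain m c where m: "LT d0 (\<lambda>e. p e r j) m c" using LTp rS j by blast
      have jS: "j \<in> S" using j YS rS by auto
      have "eventually (\<lambda>e. p e r j \<le> 1 - p e r r) (at_right 0)"
        using evS by (rule eventually_mono) (use hge jS j in auto)
      hence "mh \<le> m" using LT_le_exp[OF m LTh _ d0pos] by blast
      from LT_div[OF m LTh this d0pos] show ?thesis by blast
    qed
    have redA: "reduced_p p r e i j = p e i j + p e i r * (p e r j / (1 - p e r r))" for e i j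
      unfolding reduced_p_def by simp
    have condA: "condition_A (S - {r}) eps0 (reduced_p p r) RY"
      unfolding condition_A_def
    proof (intro conjI ballI)
      fix i assume i: "i \<in> S - {r}"
      obtain y where y: "y \<in> Y i" using YS i by blast
      have yS: "y \<in> S" using y YS i by auto
      show "RY i \<noteq> {}"
      proof (cases "y = r")
        case True thus ?thesis using x xS y unfolding RY_def reduced_Y_def by auto
      next
        case False thus ?thesis using y yS unfolding RY_def reduced_Y_def by auto
      qed
    next
      fix i assume i: "i \<in> S - {r}"
      show "RY i \<subseteq> S - {r}" by (rule RYsub)
    next
      fix i j e assume i: "i \<in> S - {r}" and j: "j \<in> RY i" and e: "e \<in> {0<..eps0}"
      have jS: "j \<in> S" using j RYsub by auto
      have pr: "1 - p e r r > 0" using prr e by simp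
      have n1: "0 \<le> p e i j" "0 \<le> p e i r" "0 \<le> p e r j" using nonneg e i jS rS by auto
      have "0 \<le> p e i r * (p e r j / (1 - p e r r))" using n1 pr by simp
      moreover have "p e i j > 0 \<or> p e i r * (p e r j / (1 - p e r r)) > 0"
      proof (cases "j \<in> Y i")
        case True thus ?thesis using pos i e by auto
      next
        case False
        hence "r \<in> Y i" "j \<in> Y r" using j unfolding RY_def reduced_Y_def by auto
        hence "p e i r > 0" "p e r j > 0" using pos i rS e by auto
        thus ?thesis using pr by simp
      qed
      ultimately show "reduced_p p r e i j > 0" unfolding redA using n1 by linarith
    next
      fix i j e assume i: "i \<in> S - {r}" and j: "j \<in> S - {r} - RY i" and e: "e \<in> {0<..eps0}"
      have nY: "j \<notin> Y i" and nb: "\<not> (r \<in> Y i \<and> j \<in> Y r)" using j unfolding RY_def reduced_Y_def by auto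
      have "p e i j = 0" using zero i j nY e by auto
      moreover have "p e i r = 0 \<or> p e r j = 0" using nb zero i j rS e by auto
      ultimately show "reduced_p p r e i j = 0" unfolding redA by auto
    next
      fix i j assume i: "i \<in> S - {r}" and j: "j \<in> S - {r}"
      obtain n :: nat and l where nl: "n \<ge> 1" "l 0 = i" "l n = j" "\<forall>m\<in>{1..n}. l m \<in> Y (l (m - 1))"
        using irr i j by blast
      have "(i, j) \<in> (rel Y)^+" using path_to_trancl[OF nl(4) nl(1)] nl by simp
      hence "(i, j) \<in> (rel RY)^+" using reduce_trancl[OF rS YS'] i j unfolding RY_def by blast
      from trancl_to_path[OF this]
      show "\<exists>n::nat. \<exists>l::nat \<Rightarrow> nat. n \<ge> 1 \<and> l 0 = i \<and> l n = j \<and> (\<forall>m\<in>{1..n}. l m \<in> RY (l (m - 1)))" .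
    qed
    have third: "\<forall>i\<in>S - {r}. \<forall>j\<in>RY i. expansion_D' eps0 (reduced_p p r) i j d0"
    proof (intro ballI)
      fix i j assume i: "i \<in> S - {r}" and j: "j \<in> RY i"
      have jS: "j \<in> S" "j \<noteq> r" using j RYsub by auto
      have "\<exists>m c. LT d0 (\<lambda>e. reduced_p p r e i j) m c"
      proof (cases "r \<in> Y i \<and> j \<in> Y r")
        case True
        obtain m1 c1 where m1: "LT d0 (\<lambda>e. p e i r) m1 c1" using LTp i True by blast
        obtain m2 c2 where m2: "LT d0 (\<lambda>e. p e r j / (1 - p e r r)) m2 c2" using LTq True jS by blast
        have T: "LT d0 (\<lambda>e. p e i r * (p e r j / (1 - p e r r))) (m1 + m2) (c1 * c2)"
          using LT_mult[OF m1 m2 d0pos] .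
        show ?thesis
        proof (cases "j \<in> Y i")
          case True
          obtain m3 c3 where m3: "LT d0 (\<lambda>e. p e i j) m3 c3" using LTp i True by blast
          from LT_add_ex[OF m3 T d0pos] show ?thesis unfolding redA .
        next
          case False
          have "eventually (\<lambda>e. p e i r * (p e r j / (1 - p e r r)) = reduced_p p r e i j) (at_right 0)"
            using evS by (rule eventually_mono) (use zero i jS False in \<open>auto simp: redA\<close>)
          from LT_cong[OF T this] show ?thesis by blast
        qed
      next
        case False
        have jY: "j \<in> Y i" using j False unfolding RY_def reduced_Y_def by auto
        obtain m3 c3 where m3: "LT d0 (\<lambda>e. p e i j) m3 c3" using LTp i jY by blast
        have "eventually (\<lambda>e. p e i j = reduced_p p r e i j) (at_right 0)"
          using evS by (rule eventually_mono) (use zero i jS False rS in \<open>auto simp: redA\<close>)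
        from LT_cong[OF m3 this] show ?thesis by blast
      qed
      then obtain m c where "LT d0 (\<lambda>e. reduced_p p r e i j) m c" by blast
      from LT_to_exp[where q="reduced_p p r" and i=i and j=j, OF this d0pos assms(2)] show "expansion_D' eps0 (reduced_p p r) i j d0" .
    qed
    show "condition_A ({1..N} - {r}) eps0 (reduced_p p r) (reduced_Y {1..N} Y r) \<and>
           condition_D' ({1..N} - {r}) eps0 (reduced_p p r) (reduced_Y {1..N} Y r) \<and>
           (\<forall>i\<in>{1..N} - {r}. \<forall>j\<in>reduced_Y {1..N} Y r i.
              \<exists>d. d \<ge> Min {\<delta> i' j' | i' j'. i' \<in> {1..N} \<and> j' \<in> Y i'} \<and>
                  expansion_D' eps0 (reduced_p p r) i j d)"
      unfolding SS using condA third unfolding condition_D'_def d0_def D_def by blast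
  qed
qed

end
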